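(* Assume (H3)–(H7). Let $r(t,x)\in\mathbb R$, $m(t,x)\in\mathbb R^d$, $e(t,x)\in\mathbb R$ be smooth functions of $(t,x)\in\mathbb R\times\mathbb R^d$, with enough integrability that all quantities below can be integrated against $\rho$, solving $$\partial_t r=\nabla_x^*\cdot m,\quad \partial_t m=-\nabla_x r+\sqrt{\tfrac2d}\,e\,\nabla_x\phi,\quad \partial_t e=-\sqrt{\tfrac2d}\,\nabla_x\cdot m,\quad \tfrac1{\sqrt{2d}}(\partial_t e)\,\mathrm{Id}_{d\times d}=-\nabla_x^{\mathrm{sym}}m,\quad \nabla_x e=0.$$ Then the matrix $A:=\langle\nabla_x^{\mathrm{skew}}m\rangle$ is skew-symmetric and independent of $t$, $r_0:=\langle r\rangle$ is independent of $t$, and with $b(t):=\langle m\rangle$, $c(t):=\langle e\rangle$, $$e(t,x)=c(t),\quad m(t,x)=Ax+b(t)-\tfrac1{\sqrt{2d}}c'(t)\,x,\quad r(t,x)=r_0-b'(t)\cdot x+\tfrac{\xi_2(x)}{2\sqrt{2d}}c''(t)+\sqrt{\tfrac2d}\,c(t)\,\xi_\phi(x),$$ and for all $(t,x)$, $$\tfrac{2\xi_\phi(x)+\nabla_x\phi(x)\cdot x-d}{\sqrt{2d}}\,c'+\tfrac{\xi_2(x)}{2\sqrt{2d}}\,c'''-\nabla_x\phi(x)\cdot b-b''\cdot x-\nabla_x\phi(x)\cdot Ax=0.$$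
   Context: $\phi\in C^2(\mathbb R^d)$, $\rho=e^{-\phi}$, with (H3) $\int\rho=1$, $\int x\rho\,dx=0$; (H4) for every $\varepsilon>0$ there is $C_\varepsilon$ with $|\nabla^2\phi|\le\varepsilon|\nabla\phi|^2+C_\varepsilon$; (H5) Poincaré inequality $c_P\int|\varphi-\langle\varphi\rangle|^2\rho\le\int|\nabla\varphi|^2\rho$; (H6) $\int(|x|^4+|\phi|^2+|\nabla\phi|^4)\rho<\infty$; (H7) $\int\nabla^2\phi\,\rho=\mathrm{Id}$. Here $\langle\varphi\rangle:=\int\varphi\rho\,dx$ (componentwise for vector/matrix valued functions). For a vector field $u$, $\nabla_x^*\cdot u:=-\nabla_x\cdot u+\nabla_x\phi\cdot u$. $(\nabla_x^{\mathrm{sym}}m)_{ij}=\frac12(\partial_jm_i+\partial_im_j)$, $(\nabla_x^{\mathrm{skew}}m)_{ij}=\frac12(\partial_jm_i-\partial_im_j)$. $\xi_2(x)=|x|^2-\langle|x|^2\rangle$, $\xi_\phi(x)=\phi(x)-\langle\phi\rangle$. *)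

theory Defs
  imports "HOL-Analysis.Analysis"
begin

text \<open>C-infinity: every iterated (Frechet) directional derivative exists everywhere.\<close>
definition smooth_fun :: "('a::euclidean_space \<Rightarrow> 'b::real_normed_vector) \<Rightarrow> bool" where
  "smooth_fun f \<longleftrightarrow>
     (\<forall>vs::'a list. \<forall>x. (foldr (\<lambda>v g y. frechet_derivative g (at y) v) vs f) differentiable (at x))"

definition grad :: "(real^'n \<Rightarrow> real) \<Rightarrow> real^'n \<Rightarrow> real^'n" where
  "grad f x = (\<chi> i. frechet_derivative f (at x) (axis i 1))"

definition jac :: "(real^'n \<Rightarrow> real^'m) \<Rightarrow> real^'n \<Rightarrow> real^'n^'m" where
  "jac u x = (\<chi> i j. frechet_derivative u (at x) (axis j 1) $ i)"

definition divg :: "(real^'n \<Rightarrow> real^'n) \<Rightarrow> real^'n \<Rightarrow> real" where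
  "divg u x = (\<Sum>i\<in>UNIV. jac u x $ i $ i)"

definition hess :: "(real^'n \<Rightarrow> real) \<Rightarrow> real^'n \<Rightarrow> real^'n^'n" where
  "hess f x = jac (grad f) x"

definition symgrad :: "(real^'n \<Rightarrow> real^'n) \<Rightarrow> real^'n \<Rightarrow> real^'n^'n" where
  "symgrad u x = (\<chi> i j. (jac u x $ i $ j + jac u x $ j $ i) / 2)"

definition skewgrad :: "(real^'n \<Rightarrow> real^'n) \<Rightarrow> real^'n \<Rightarrow> real^'n^'n" where
  "skewgrad u x = (\<chi> i j. (jac u x $ i $ j - jac u x $ j $ i) / 2)"

definition C1_fun :: "(real^'n \<Rightarrow> real) \<Rightarrow> bool" where
  "C1_fun f \<longleftrightarrow> (\<forall>x. f differentiable (at x)) \<and> continuous_on UNIV (grad f)"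

definition C2_fun :: "(real^'n \<Rightarrow> real) \<Rightarrow> bool" where
  "C2_fun f \<longleftrightarrow> (\<forall>x. f differentiable (at x)) \<and> (\<forall>x. grad f differentiable (at x))
                 \<and> continuous_on UNIV (hess f)"

definition rho :: "(real^'n \<Rightarrow> real) \<Rightarrow> real^'n \<Rightarrow> real" where
  "rho \<phi> x = exp (- \<phi> x)"

definition avg :: "(real^'n \<Rightarrow> real) \<Rightarrow> (real^'n \<Rightarrow> 'b::{banach,second_countable_topology}) \<Rightarrow> 'b" where
  "avg \<phi> f = (\<integral>x. rho \<phi> x *\<^sub>R f x \<partial>lborel)"

definition xi2 :: "(real^'n \<Rightarrow> real) \<Rightarrow> real^'n \<Rightarrow> real" where
  "xi2 \<phi> x = (norm x)^2 - avg \<phi> (\<lambda>y. (norm y)^2)"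

definition xiphi :: "(real^'n \<Rightarrow> real) \<Rightarrow> real^'n \<Rightarrow> real" where
  "xiphi \<phi> x = \<phi> x - avg \<phi> \<phi>"

end

theory Submission
  imports Defs
begin

lemma integral_translate:
  fixes h :: "'a::euclidean_space \<Rightarrow> real"
  assumes "h \<in> borel_measurable borel"
  shows "(\<integral>x. h (x + c) \<partial>lborel) = (\<integral>x. h x \<partial>lborel)"
proof -
  have "(\<integral>x. h x \<partial>lborel) = (\<integral>x. h x \<partial>distr lborel borel ((+) c))"
    by (simp add: lborel_distr_plus)
  also have "\<dots> = (\<integral>x. h (c + x) \<partial>lborel)"
    by (rule integral_distr) (auto simp: assms)
  finally show ?thesis by (simp add: add.commute)
qed

lemma integrable_translate:
  fixes h :: "'a::euclidean_space \<Rightarrow> real"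
  assumes "integrable lborel h"
  shows "integrable lborel (\<lambda>x. h (x + c))"
proof -
  have "integrable (distr lborel borel ((+) c)) h"
    using assms by (simp add: lborel_distr_plus)
  then have "integrable lborel (\<lambda>x. h (c + x))"
    using borel_measurable_integrable[OF assms] by (subst (asm) integrable_distr_eq) auto
  then show ?thesis by (simp add: add.commute)
qed

lemma ibp_dir:
  fixes G D :: "'a::euclidean_space \<Rightarrow> real" and u :: 'a
  assumes Dc: "continuous_on UNIV D"
  and der: "\<And>x s. ((\<lambda>s. G (x + s *\<^sub>R u)) has_real_derivative D (x + s *\<^sub>R u)) (at s)"
  and iG: "integrable lborel G" and iD: "integrable lborel D"
  shows "(\<integral>x. D x \<partial>lborel) = 0"
proof -
  have PS: "pair_sigma_finite (lborel::real measure) (lborel::'a measure)"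
    by (simp add: pair_sigma_finite_def sigma_finite_lborel)
  define f where "f = (\<lambda>(s::real) (x::'a). indicator {0..1} s * D (x + s *\<^sub>R u))"
  have Dm: "D \<in> borel_measurable borel" using Dc by (rule borel_measurable_continuous_onI)
  have Gm: "G \<in> borel_measurable borel" using borel_measurable_integrable[OF iG] by simp
  have cm: "(\<lambda>p::real\<times>'a. D (snd p + fst p *\<^sub>R u)) \<in> borel_measurable borel"
    by (intro borel_measurable_continuous_onI continuous_on_compose2[OF Dc])
       (auto intro!: continuous_intros)
  have fm: "case_prod f \<in> borel_measurable (lborel \<Otimes>\<^sub>M lborel)"
  proof -
    have "(\<lambda>p::real\<times>'a. indicator {0..1} (fst p) * D (snd p + fst p *\<^sub>R u)) \<in> borel_measurable borel"
    proof -
      have "(indicator ({0..1::real} \<times> (UNIV::'a set)) :: real\<times>'a \<Rightarrow> real) \<in> borel_measurable borel"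
        by (intro borel_measurable_indicator borel_closed closed_Times) auto
      moreover have "(\<lambda>p::real\<times>'a. indicator {0..1} (fst p) :: real) = indicator ({0..1::real} \<times> (UNIV::'a set))"
        by (auto simp: indicator_def fun_eq_iff)
      ultimately have "(\<lambda>p::real\<times>'a. indicator {0..1} (fst p) :: real) \<in> borel_measurable borel" by simp
      then show ?thesis using cm by (rule borel_measurable_times)
    qed
    then show ?thesis unfolding lborel_prod measurable_lborel1
      by (simp add: f_def case_prod_beta')
  qed
  have inner: "(\<integral>x. f s x \<partial>lborel) = indicator {0..1} s * (\<integral>x. D x \<partial>lborel)" for s
    unfolding f_def using integral_translate[OF Dm, of "s *\<^sub>R u"] by simp
  have innerabs: "(\<integral>x. norm (f s x) \<partial>lborel) = indicator {0..1} s * (\<integral>x. norm (D x) \<partial>lborel)" for s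
  proof -
    have "(\<integral>x. norm (f s x) \<partial>lborel) = (\<integral>x. indicator {0..1} s * norm (D (x + s *\<^sub>R u)) \<partial>lborel)"
      by (auto simp: f_def indicator_def intro!: Bochner_Integration.integral_cong)
    also have "\<dots> = indicator {0..1} s * (\<integral>x. norm (D x) \<partial>lborel)"
      using integral_translate[of "\<lambda>x. norm (D x)" "s *\<^sub>R u"] Dm by simp
    finally show ?thesis .
  qed
  have intf: "integrable (lborel \<Otimes>\<^sub>M lborel) (case_prod f)"
  proof (rule pair_sigma_finite.Fubini_integrable[OF PS fm])
    show "integrable lborel (\<lambda>s. \<integral>x. norm (case_prod f (s, x)) \<partial>lborel)"
      unfolding case_prod_conv innerabs by (intro integrable_mult_left integrable_real_indicator) auto
    show "AE s in lborel. integrable lborel (\<lambda>x. case_prod f (s, x))"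
      using integrable_translate[OF iD] by (simp add: f_def)
  qed
  have "(\<integral>x. (\<integral>s. f s x \<partial>lborel) \<partial>lborel) = (\<integral>s. (\<integral>x. f s x \<partial>lborel) \<partial>lborel)"
    by (rule pair_sigma_finite.Fubini_integral[OF PS intf])
  also have "\<dots> = (\<integral>x. D x \<partial>lborel)"
    by (simp add: inner)
  finally have eq: "(\<integral>x. (\<integral>s. f s x \<partial>lborel) \<partial>lborel) = (\<integral>x. D x \<partial>lborel)" .
  have ftc: "(\<integral>s. f s x \<partial>lborel) = G (x + u) - G x" for x
  proof -
    have "(\<integral>s. indicator {0..1} s *\<^sub>R D (x + s *\<^sub>R u) \<partial>lborel) = G (x + 1 *\<^sub>R u) - G (x + 0 *\<^sub>R u)"
    proof (rule integral_FTC_atLeastAtMost)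
      show "((\<lambda>s. G (x + s *\<^sub>R u)) has_vector_derivative D (x + s *\<^sub>R u)) (at s within {0..1})" for s
        using der[of x s] by (simp add: has_real_derivative_iff_has_vector_derivative has_vector_derivative_at_within)
      show "continuous_on {0..1} (\<lambda>s. D (x + s *\<^sub>R u))"
        by (intro continuous_on_compose2[OF Dc]) (auto intro!: continuous_intros)
    qed simp
    then show ?thesis by (simp add: f_def)
  qed
  have "(\<integral>x. (\<integral>s. f s x \<partial>lborel) \<partial>lborel) = (\<integral>x. G (x + u) \<partial>lborel) - (\<integral>x. G x \<partial>lborel)"
    unfolding ftc using integrable_translate[OF iG] iG by simp
  also have "\<dots> = 0" using integral_translate[OF Gm] by simp
  finally show ?thesis using eq by simp
qed

lemma sm_diff: "smooth_fun F \<Longrightarrow> F differentiable (at y)"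
  unfolding smooth_fun_def by (drule spec[of _ "[]"]) simp

lemma sm_Dt: "smooth_fun F \<Longrightarrow> smooth_fun (\<lambda>y. frechet_derivative F (at y) v)"
  unfolding smooth_fun_def
proof (intro allI)
  fix vs x assume H: "\<forall>vs x. foldr (\<lambda>v g y. frechet_derivative g (at y) v) vs F differentiable at x"
  show "foldr (\<lambda>v g y. frechet_derivative g (at y) v) vs (\<lambda>y. frechet_derivative F (at y) v) differentiable at x"
    using H[rule_format, of "vs @ [v]" x] by simp
qed

lemma sm_time:
  fixes F :: "real \<times> 'a::euclidean_space \<Rightarrow> 'b::real_normed_vector"
  assumes "F differentiable (at (t, x))"
  shows "((\<lambda>s. F (s, x)) has_vector_derivative frechet_derivative F (at (t, x)) (1, 0)) (at t)"
proof -
  have D: "(F has_derivative frechet_derivative F (at (t, x))) (at (t, x))"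
    using assms frechet_derivative_works by blast
  have P: "((\<lambda>s. (s, x)) has_derivative (\<lambda>h. (h, 0))) (at t)"
    by (auto intro!: derivative_eq_intros)
  have "((\<lambda>s. F (s, x)) has_derivative (\<lambda>h. frechet_derivative F (at (t, x)) (h, 0))) (at t)"
    using has_derivative_compose[OF P, of F] D by simp
  moreover have "(\<lambda>h. frechet_derivative F (at (t, x)) (h, 0)) = (\<lambda>h. h *\<^sub>R frechet_derivative F (at (t, x)) (1, 0))"
  proof
    fix h :: real
    have "(h, 0::'a) = h *\<^sub>R (1, 0)" by simp
    then show "frechet_derivative F (at (t, x)) (h, 0) = h *\<^sub>R frechet_derivative F (at (t, x)) (1, 0)"
      using linear_cmul[OF has_derivative_linear[OF D]] by metis
  qed
  ultimately show ?thesis unfolding has_vector_derivative_def by simp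
qed

lemma sm_space:
  fixes F :: "real \<times> 'a::euclidean_space \<Rightarrow> 'b::real_normed_vector"
  assumes "F differentiable (at (t, x))"
  shows "((\<lambda>z. F (t, z)) has_derivative (\<lambda>v. frechet_derivative F (at (t, x)) (0, v))) (at x)"
proof -
  have D: "(F has_derivative frechet_derivative F (at (t, x))) (at (t, x))"
    using assms frechet_derivative_works by blast
  have P: "((\<lambda>z. (t, z)) has_derivative (\<lambda>h. (0, h))) (at x)"
    by (auto intro!: derivative_eq_intros)
  show ?thesis
    using has_derivative_compose[OF P, of F] D by simp
qed

lemma sm_space_diff:
  fixes F :: "real \<times> 'a::euclidean_space \<Rightarrow> 'b::real_normed_vector"
  assumes "smooth_fun F"
  shows "(\<lambda>z. F (t, z)) differentiable (at x)"
  using sm_space[OF sm_diff[OF assms]] unfolding differentiable_def by blast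

lemma sm_time_real:
  fixes F :: "real \<times> 'a::euclidean_space \<Rightarrow> real"
  assumes "F differentiable (at (t, x))"
  shows "((\<lambda>s. F (s, x)) has_real_derivative frechet_derivative F (at (t, x)) (1, 0)) (at t)"
  using sm_time[OF assms] by (simp add: has_real_derivative_iff_has_vector_derivative)

lemma grad_inner:
  fixes f :: "real^'n \<Rightarrow> real"
  assumes "f differentiable (at x)"
  shows "frechet_derivative f (at x) v = grad f x \<bullet> v"
proof -
  have L: "linear (frechet_derivative f (at x))"
    using assms frechet_derivative_works has_derivative_linear by blast
  have "v = (\<Sum>i\<in>UNIV. v$i *\<^sub>R axis i 1)"
    using basis_expansion[of v] by (simp add: scalar_mult_eq_scaleR)
  then have "frechet_derivative f (at x) v = frechet_derivative f (at x) (\<Sum>i\<in>UNIV. v$i *\<^sub>R axis i 1)"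
    by metis
  also have "\<dots> = (\<Sum>i\<in>UNIV. v$i * frechet_derivative f (at x) (axis i 1))"
    using L by (simp add: linear_sum linear_cmul)
  also have "\<dots> = grad f x \<bullet> v"
    by (simp add: grad_def inner_vec_def mult.commute)
  finally show ?thesis .
qed

lemma jac_mult:
  fixes u :: "real^'n \<Rightarrow> real^'m"
  assumes "u differentiable (at x)"
  shows "frechet_derivative u (at x) v = jac u x *v v"
proof -
  have L: "linear (frechet_derivative u (at x))"
    using assms frechet_derivative_works has_derivative_linear by blast
  have "v = (\<Sum>j\<in>UNIV. v$j *\<^sub>R axis j 1)"
    using basis_expansion[of v] by (simp add: scalar_mult_eq_scaleR)
  then have "frechet_derivative u (at x) v = frechet_derivative u (at x) (\<Sum>j\<in>UNIV. v$j *\<^sub>R axis j 1)"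
    by metis
  also have "\<dots> = (\<Sum>j\<in>UNIV. v$j *\<^sub>R frechet_derivative u (at x) (axis j 1))"
    using L by (simp add: linear_sum linear_cmul)
  also have "\<dots> = jac u x *v v"
    by (simp add: jac_def matrix_vector_mult_def vec_eq_iff mult.commute)
  finally show ?thesis .
qed

lemma quad_sym:
  fixes J :: "real^'n^'n"
  shows "(J *v v) \<bullet> v = (\<Sum>i\<in>UNIV. \<Sum>j\<in>UNIV. ((J$i$j + J$j$i)/2) * (v$i * v$j))"
proof -
  have 1: "(J *v v) \<bullet> v = (\<Sum>i\<in>UNIV. \<Sum>j\<in>UNIV. J$i$j * (v$i * v$j))"
    by (simp add: matrix_vector_mult_def inner_vec_def sum_distrib_right sum_distrib_left algebra_simps)
  have 2: "(\<Sum>i\<in>UNIV. \<Sum>j\<in>UNIV. J$j$i * (v$i * v$j)) = (\<Sum>i\<in>UNIV. \<Sum>j\<in>UNIV. J$i$j * (v$i * v$j))"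
    by (subst sum.swap) (simp add: mult.commute)
  have "(\<Sum>i\<in>UNIV. \<Sum>j\<in>UNIV. ((J$i$j + J$j$i)/2) * (v$i * v$j))
      = ((\<Sum>i\<in>UNIV. \<Sum>j\<in>UNIV. J$i$j * (v$i * v$j)) + (\<Sum>i\<in>UNIV. \<Sum>j\<in>UNIV. J$j$i * (v$i * v$j))) / 2"
    by (simp add: sum.distrib sum_divide_distrib[symmetric] add_divide_distrib ring_distribs)
  then show ?thesis using 1 2 by simp
qed

lemma quad_iso:
  fixes J :: "real^'n^'n"
  assumes "\<And>i j. (J$i$j + J$j$i)/2 = \<mu> * (if i = j then 1 else 0)"
  shows "(J *v v) \<bullet> v = \<mu> * (v \<bullet> v)"
proof -
  have h: "\<mu> * (if i = j then 1 else 0) * (v$i * v$j) = (if j = i then \<mu> * (v$i * v$j) else 0)" for i j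
    by simp
  show ?thesis
    unfolding quad_sym assms h by (simp add: inner_vec_def sum_distrib_left)
qed

lemma skew_lin:
  fixes W :: "'a::real_inner \<Rightarrow> 'a"
  assumes H: "\<And>y z. (W y - W z) \<bullet> (y - z) = 0" and W0: "W 0 = 0"
  shows skew_lin_skew: "\<And>y z. W y \<bullet> z = - (W z \<bullet> y)" and skew_lin_lin: "linear W"
proof -
  have d: "W y \<bullet> y = 0" for y using H[of y 0] W0 by simp
  show sk: "W y \<bullet> z = - (W z \<bullet> y)" for y z
    using H[of y z] d[of y] d[of z] by (simp add: inner_diff_left inner_diff_right inner_commute)
  have add: "W (a + b) = W a + W b" for a b
  proof -
    let ?q = "W (a + b) - W a - W b"
    have "?q \<bullet> z = 0" for z
      using sk[of "a+b" z] sk[of a z] sk[of b z] by (simp add: inner_diff_left inner_add_right)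
    then have "?q \<bullet> ?q = 0" by blast
    then have "?q = 0" by (simp only: inner_eq_zero_iff)
    then show ?thesis by (simp add: algebra_simps)
  qed
  have sc: "W (r *\<^sub>R a) = r *\<^sub>R W a" for r a
  proof -
    let ?q = "W (r *\<^sub>R a) - r *\<^sub>R W a"
    have "?q \<bullet> z = 0" for z
      using sk[of "r *\<^sub>R a" z] sk[of a z] by (simp add: inner_diff_left)
    then have "?q \<bullet> ?q = 0" by blast
    then show ?thesis by simp
  qed
  show "linear W" by (rule linearI[OF add sc])
qed

lemma line_const:
  fixes g :: "'a::real_normed_vector \<Rightarrow> real"
  assumes D: "\<And>p. (g has_derivative G p) (at p)"
    and Z: "\<And>\<tau>::real. G (z + \<tau> *\<^sub>R v) v = 0"
  shows "g (z + v) = g z"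
proof -
  let ?h = "\<lambda>\<tau>::real. g (z + \<tau> *\<^sub>R v)"
  have "DERIV ?h \<tau> :> 0" for \<tau>
  proof -
    have P: "((\<lambda>\<tau>. z + \<tau> *\<^sub>R v) has_derivative (\<lambda>h. h *\<^sub>R v)) (at \<tau>)"
      by (auto intro!: derivative_eq_intros)
    have "(?h has_derivative (\<lambda>h. G (z + \<tau> *\<^sub>R v) (h *\<^sub>R v))) (at \<tau>)"
      using has_derivative_compose[OF P D] by simp
    moreover have "x * 0 = G (z + \<tau> *\<^sub>R v) (x *\<^sub>R v)" for x
      using linear_cmul[OF has_derivative_linear[OF D[of "z + \<tau> *\<^sub>R v"]], of x v] Z[of \<tau>] by simp
    ultimately show ?thesis by (rule has_derivative_imp_has_field_derivative)
  qed
  then have "?h 1 = ?h 0" by (intro DERIV_isconst_all) auto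
  then show ?thesis by simp
qed

lemma killing:
  fixes m :: "'a::real_inner \<Rightarrow> 'a"
  assumes D: "\<And>p. (m has_derivative Dm p) (at p)"
    and K: "\<And>p v. Dm p v \<bullet> v = \<mu> * (v \<bullet> v)"
  shows "((m y - \<mu> *\<^sub>R y) - (m z - \<mu> *\<^sub>R z)) \<bullet> (y - z) = 0"
proof -
  let ?v = "y - z"
  have "(\<lambda>p. (m p - \<mu> *\<^sub>R p) \<bullet> ?v) (z + ?v) = (\<lambda>p. (m p - \<mu> *\<^sub>R p) \<bullet> ?v) z"
  proof (rule line_const)
    show "((\<lambda>p. (m p - \<mu> *\<^sub>R p) \<bullet> ?v) has_derivative (\<lambda>h. (Dm p h - \<mu> *\<^sub>R h) \<bullet> ?v)) (at p)" for p
      using D[of p] by (auto intro!: derivative_eq_intros)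
    show "(Dm (z + \<tau> *\<^sub>R ?v) ?v - \<mu> *\<^sub>R ?v) \<bullet> ?v = 0" for \<tau>
      using K by (simp add: inner_diff_left)
  qed
  then show ?thesis by (simp add: inner_diff_left)
qed

lemma dir_deriv:
  fixes f :: "real^'n \<Rightarrow> real"
  assumes "\<And>p. f differentiable (at p)"
  shows "((\<lambda>s. f (x + s *\<^sub>R u)) has_real_derivative (grad f (x + s *\<^sub>R u) \<bullet> u)) (at s)"
proof -
  have D: "(f has_derivative frechet_derivative f (at p)) (at p)" for p
    using assms frechet_derivative_works by blast
  have P: "((\<lambda>s. x + s *\<^sub>R u) has_derivative (\<lambda>h. h *\<^sub>R u)) (at s)"
    by (auto intro!: derivative_eq_intros)
  have "((\<lambda>s. f (x + s *\<^sub>R u)) has_derivative (\<lambda>h. frechet_derivative f (at (x + s *\<^sub>R u)) (h *\<^sub>R u))) (at s)"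
    using has_derivative_compose[OF P D] by simp
  moreover have "h * (grad f (x + s *\<^sub>R u) \<bullet> u) = frechet_derivative f (at (x + s *\<^sub>R u)) (h *\<^sub>R u)" for h
    using grad_inner[OF assms, of "x + s *\<^sub>R u" "h *\<^sub>R u"] by simp
  ultimately show ?thesis by (rule has_derivative_imp_has_field_derivative)
qed

lemma ibound:
  fixes g :: "real^'n \<Rightarrow> 'b::{banach, second_countable_topology}"
  assumes "integrable lborel f" "continuous_on UNIV g" "\<And>x. norm (g x) \<le> f x"
  shows "integrable lborel g"
proof (rule Bochner_Integration.integrable_bound[OF assms(1)])
  show "g \<in> borel_measurable lborel" using assms(2) borel_measurable_continuous_onI by simp
  show "AE x in lborel. norm (g x) \<le> norm (f x)"
    using assms(3) by (auto intro: order_trans[OF _ abs_ge_self])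
qed

lemma el2: "a^2 \<le> 1 + (a::real)^4"
proof -
  have "0 \<le> (a^2 - 1)^2" by simp
  then have "0 \<le> a^4 - 2*a^2 + 1" by (simp add: power2_eq_square power4_eq_xxxx algebra_simps)
  moreover have "0 \<le> a^4" by simp
  ultimately show ?thesis by linarith
qed
lemma el4: "\<bar>a::real\<bar> \<le> 1 + a^2"
proof -
  have "0 \<le> (\<bar>a\<bar> - 1)^2" by simp
  then have "0 \<le> a^2 - 2*\<bar>a\<bar> + 1" by (simp add: power2_eq_square algebra_simps)
  moreover have "0 \<le> a^2" by simp
  ultimately show ?thesis by linarith
qed
lemma el1: "(a::real) \<ge> 0 \<Longrightarrow> a \<le> 1 + a^4"
proof -
  assume a: "a \<ge> 0"
  have "0 \<le> (a - 1)^2" by simp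
  then have "2 * a \<le> a^2 + 1" by (simp add: power2_eq_square algebra_simps)
  moreover have "0 \<le> a^4" by simp
  ultimately show ?thesis using el2[of a] by linarith
qed
lemma el3: "(a::real) \<ge> 0 \<Longrightarrow> b \<ge> 0 \<Longrightarrow> a * b \<le> 1 + a^4 + b^4"
proof -
  assume "a \<ge> 0" "b \<ge> 0"
  have "0 \<le> (a - b)^2" by simp
  then have "2 * (a * b) \<le> a^2 + b^2" by (simp add: power2_eq_square algebra_simps)
  moreover have "0 \<le> a^4" "0 \<le> b^4" by simp_all
  ultimately show ?thesis using el2[of a] el2[of b] by linarith
qed

locale philoc =
  fixes \<phi> :: "real^'n \<Rightarrow> real"
  assumes phi_C2: "C2_fun \<phi>"
    and H3a: "(\<integral>x. rho \<phi> x \<partial>lborel) = 1"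
    and H6: "integrable lborel (\<lambda>x. ((norm x)^4 + (\<phi> x)^2 + (norm (grad \<phi> x))^4) * rho \<phi> x)"
begin

lemma phi_diff: "\<phi> differentiable (at p)" using phi_C2 unfolding C2_fun_def by blast
lemma grad_diff: "grad \<phi> differentiable (at p)" using phi_C2 unfolding C2_fun_def by blast
lemma cont_phi: "continuous_on UNIV \<phi>"
  by (meson differentiable_at_imp_differentiable_on differentiable_imp_continuous_on phi_diff)
lemma cont_grad: "continuous_on UNIV (grad \<phi>)"
  by (meson differentiable_at_imp_differentiable_on differentiable_imp_continuous_on grad_diff)
lemma cont_rho: "continuous_on UNIV (rho \<phi>)"
  unfolding rho_def by (intro continuous_intros cont_phi)
lemma rho_pos: "rho \<phi> x > 0" by (simp add: rho_def)

lemma int_rho: "integrable lborel (rho \<phi>)"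
  using H3a not_integrable_integral_eq by fastforce

definition "Wd x = rho \<phi> x + ((norm x)^4 + (\<phi> x)^2 + (norm (grad \<phi> x))^4) * rho \<phi> x"
lemma int_Wd: "integrable lborel Wd"
  unfolding Wd_def using int_rho H6 by simp

lemma Wd_eq: "Wd x = (1 + (norm x)^4 + (\<phi> x)^2 + (norm (grad \<phi> x))^4) * rho \<phi> x"
  by (simp add: Wd_def algebra_simps)

lemma ib: "continuous_on UNIV (g :: real^'n \<Rightarrow> 'b::{banach, second_countable_topology}) \<Longrightarrow> (\<And>x. norm (g x) \<le> Wd x) \<Longrightarrow> integrable lborel g"
  by (metis ibound int_Wd)

lemma bnd: "\<bar>a::real\<bar> \<le> 1 + (norm x)^4 + (\<phi> x)^2 + (norm (grad \<phi> x))^4 \<Longrightarrow> \<bar>a * rho \<phi> x\<bar> \<le> Wd x"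
  unfolding Wd_eq using rho_pos[of x]
  by (simp add: abs_mult)

lemma nn4: "0 \<le> (norm x)^4" "0 \<le> (\<phi> x)^2" "0 \<le> (norm (grad \<phi> x))^4" by simp_all

lemma cg: "\<bar>grad \<phi> x $ i\<bar> \<le> 1 + (norm x)^4 + (\<phi> x)^2 + (norm (grad \<phi> x))^4"
proof -
  have "\<bar>grad \<phi> x $ i\<bar> \<le> norm (grad \<phi> x)" by (rule component_le_norm_cart)
  also have "\<dots> \<le> 1 + (norm (grad \<phi> x))^4" by (rule el1) simp
  finally show ?thesis using nn4[of x] by linarith
qed

lemma cx: "\<bar>x $ j\<bar> \<le> 1 + (norm x)^4 + (\<phi> x)^2 + (norm (grad \<phi> x))^4"
proof -
  have "\<bar>x $ j\<bar> \<le> norm x" by (rule component_le_norm_cart)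
  also have "\<dots> \<le> 1 + (norm x)^4" by (rule el1) simp
  finally show ?thesis using nn4[of x] by linarith
qed

lemma cxg: "\<bar>x $ j * grad \<phi> x $ i\<bar> \<le> 1 + (norm x)^4 + (\<phi> x)^2 + (norm (grad \<phi> x))^4"
proof -
  have "\<bar>x $ j * grad \<phi> x $ i\<bar> \<le> norm x * norm (grad \<phi> x)"
    unfolding abs_mult by (intro mult_mono component_le_norm_cart) auto
  also have "\<dots> \<le> 1 + (norm x)^4 + (norm (grad \<phi> x))^4" by (rule el3) simp_all
  finally show ?thesis using nn4[of x] by linarith
qed

lemma c1: "\<bar>1::real\<bar> \<le> 1 + (norm x)^4 + (\<phi> x)^2 + (norm (grad \<phi> x))^4"
  by (simp add: add_increasing)

lemma cn2: "\<bar>(norm x)^2\<bar> \<le> 1 + (norm x)^4 + (\<phi> x)^2 + (norm (grad \<phi> x))^4"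
  using el2[of "norm x"] nn4[of x] abs_of_nonneg[OF zero_le_power2[of "norm x"]] by linarith

lemma cphi: "\<bar>\<phi> x\<bar> \<le> 1 + (norm x)^4 + (\<phi> x)^2 + (norm (grad \<phi> x))^4"
  using el4[of "\<phi> x"] nn4[of x] by linarith

lemma int_g: "integrable lborel (\<lambda>x. rho \<phi> x * grad \<phi> x $ i)"
  by (rule ib) (auto intro!: continuous_intros cont_rho cont_grad simp: mult.commute[of "rho \<phi> _"] intro: bnd[OF cg, simplified])

lemma int_x: "integrable lborel (\<lambda>x. rho \<phi> x * x $ j)"
  by (rule ib) (auto intro!: continuous_intros cont_rho simp: mult.commute[of "rho \<phi> _"] intro: bnd[OF cx, simplified])

lemma int_xg: "integrable lborel (\<lambda>x. x $ j * (rho \<phi> x * grad \<phi> x $ i))"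
proof -
  have "integrable lborel (\<lambda>x. (x $ j * grad \<phi> x $ i) * rho \<phi> x)"
    by (rule ib) (auto intro!: continuous_intros cont_rho cont_grad intro: bnd[OF cxg, simplified])
  then show ?thesis by (simp add: algebra_simps)
qed

lemma int_n2: "integrable lborel (\<lambda>x. rho \<phi> x * (norm x)^2)"
  by (rule ib) (auto intro!: continuous_intros cont_rho simp: mult.commute[of "rho \<phi> _"] intro: bnd[OF cn2, simplified])

lemma int_phi: "integrable lborel (\<lambda>x. rho \<phi> x * \<phi> x)"
  by (rule ib) (auto intro!: continuous_intros cont_rho cont_phi simp: mult.commute[of "rho \<phi> _"] intro: bnd[OF cphi, simplified])

lemma int_xv: "integrable lborel (\<lambda>x. rho \<phi> x *\<^sub>R x)"
proof (rule ib)
  show "continuous_on UNIV (\<lambda>x. rho \<phi> x *\<^sub>R x)" by (auto intro!: continuous_intros cont_rho)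
  fix x
  have "norm x \<le> 1 + (norm x)^4 + (\<phi> x)^2 + (norm (grad \<phi> x))^4"
    using el1[of "norm x"] nn4[of x] by linarith
  then have "\<bar>norm x * rho \<phi> x\<bar> \<le> Wd x" by (intro bnd) simp
  then show "norm (rho \<phi> x *\<^sub>R x) \<le> Wd x" using rho_pos[of x] by (simp add: mult.commute)
qed

lemma I1: "(\<integral>x. rho \<phi> x * grad \<phi> x $ i \<partial>lborel) = 0"
proof -
  have "(\<integral>x. - (rho \<phi> x * grad \<phi> x $ i) \<partial>lborel) = 0"
  proof (rule ibp_dir[where G = "rho \<phi>" and u = "axis i 1"])
    show "continuous_on UNIV (\<lambda>x. - (rho \<phi> x * grad \<phi> x $ i))"
      by (auto intro!: continuous_intros cont_rho cont_grad)
    show "((\<lambda>s. rho \<phi> (x + s *\<^sub>R axis i 1)) has_real_derivative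
            - (rho \<phi> (x + s *\<^sub>R axis i 1) * grad \<phi> (x + s *\<^sub>R axis i 1) $ i)) (at s)" for x s
      unfolding rho_def using dir_deriv[OF phi_diff, of x "axis i 1" s]
      by (auto intro!: derivative_eq_intros simp: inner_axis)
    show "integrable lborel (rho \<phi>)" by (rule int_rho)
    show "integrable lborel (\<lambda>x. - (rho \<phi> x * grad \<phi> x $ i))" using int_g by simp
  qed
  then show ?thesis by simp
qed

lemma I2: "(\<integral>x. x $ j * (rho \<phi> x * grad \<phi> x $ i) \<partial>lborel) = (if i = j then 1 else 0)"
proof -
  let ?d = "(if i = j then 1 else 0) :: real"
  have "(\<integral>x. ?d * rho \<phi> x - x $ j * (rho \<phi> x * grad \<phi> x $ i) \<partial>lborel) = 0"
  proof (rule ibp_dir[where G = "\<lambda>p. p $ j * rho \<phi> p" and u = "axis i 1"])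
    show "continuous_on UNIV (\<lambda>x. ?d * rho \<phi> x - x $ j * (rho \<phi> x * grad \<phi> x $ i))"
      by (auto intro!: continuous_intros cont_rho cont_grad)
    show "((\<lambda>s. (x + s *\<^sub>R axis i 1) $ j * rho \<phi> (x + s *\<^sub>R axis i 1)) has_real_derivative
            ?d * rho \<phi> (x + s *\<^sub>R axis i 1) - (x + s *\<^sub>R axis i 1) $ j * (rho \<phi> (x + s *\<^sub>R axis i 1) * grad \<phi> (x + s *\<^sub>R axis i 1) $ i)) (at s)" for x s
    proof -
      have e: "(\<lambda>s. (x + s *\<^sub>R axis i 1) $ j) = (\<lambda>s. x $ j + s * ?d)"
        by (auto simp: axis_def)
      have dd: "((\<lambda>s. \<phi> (x + s *\<^sub>R axis i 1)) has_real_derivative grad \<phi> (x + s *\<^sub>R axis i 1) $ i) (at s)"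
        using dir_deriv[OF phi_diff, of x "axis i 1" s] by (simp add: inner_axis)
      show ?thesis
        unfolding rho_def e using dd
        by (auto intro!: derivative_eq_intros simp: algebra_simps axis_def)
    qed
    show "integrable lborel (\<lambda>p. p $ j * rho \<phi> p)" using int_x[of j] by (simp add: mult.commute)
    show "integrable lborel (\<lambda>x. ?d * rho \<phi> x - x $ j * (rho \<phi> x * grad \<phi> x $ i))"
      using int_rho int_xg[of j i] by auto
  qed
  then have "?d * (\<integral>x. rho \<phi> x \<partial>lborel) - (\<integral>x. x $ j * (rho \<phi> x * grad \<phi> x $ i) \<partial>lborel) = 0"
    using int_rho int_xg[of j i] by simp
  then show ?thesis using H3a by simp
qed

end

theorem proposition2p1:
  fixes \<phi> :: "real^'n \<Rightarrow> real"
    and r :: "real \<Rightarrow> real^'n \<Rightarrow> real"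
    and m :: "real \<Rightarrow> real^'n \<Rightarrow> real^'n"
    and e :: "real \<Rightarrow> real^'n \<Rightarrow> real"
  assumes phi_C2: "C2_fun \<phi>"
    and H3a: "(\<integral>x. rho \<phi> x \<partial>lborel) = 1"
    and H3b: "(\<integral>x. rho \<phi> x *\<^sub>R x \<partial>lborel) = 0"
    and H4: "\<forall>\<epsilon>>0. \<exists>C. \<forall>x. norm (hess \<phi> x) \<le> \<epsilon> * (norm (grad \<phi> x))^2 + C"
    and H5: "\<exists>cP>0. \<forall>f. C1_fun f \<and> integrable lborel (\<lambda>x. (f x)^2 * rho \<phi> x)
                 \<and> integrable lborel (\<lambda>x. (norm (grad f x))^2 * rho \<phi> x)
               \<longrightarrow> cP * avg \<phi> (\<lambda>x. (f x - avg \<phi> f)^2) \<le> avg \<phi> (\<lambda>x. (norm (grad f x))^2)"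
    and H6: "integrable lborel
               (\<lambda>x. ((norm x)^4 + (\<phi> x)^2 + (norm (grad \<phi> x))^4) * rho \<phi> x)"
    and H7: "avg \<phi> (hess \<phi>) = mat 1"
    and r_smooth: "smooth_fun (\<lambda>(t, x). r t x)"
    and m_smooth: "smooth_fun (\<lambda>(t, x). m t x)"
    and e_smooth: "smooth_fun (\<lambda>(t, x). e t x)"
    and eq1: "\<And>t x. deriv (\<lambda>s. r s x) t = - divg (m t) x + grad \<phi> x \<bullet> m t x"
    and eq2: "\<And>t x. vector_derivative (\<lambda>s. m s x) (at t)
                 = - grad (r t) x + (sqrt (2 / CARD('n)) * e t x) *\<^sub>R grad \<phi> x"
    and eq3: "\<And>t x. deriv (\<lambda>s. e s x) t = - sqrt (2 / CARD('n)) * divg (m t) x"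
    and eq4: "\<And>t x. (1 / sqrt (2 * CARD('n)) * deriv (\<lambda>s. e s x) t) *\<^sub>R (mat 1 :: real^'n^'n)
                 = - symgrad (m t) x"
    and eq5: "\<And>t x. grad (e t) x = 0"
  defines "A \<equiv> \<lambda>t. avg \<phi> (skewgrad (m t))"
    and "r0 \<equiv> \<lambda>t. avg \<phi> (r t)"
    and "b \<equiv> \<lambda>t. avg \<phi> (m t)"
    and "c \<equiv> \<lambda>t. avg \<phi> (e t)"
  shows "(\<forall>t. transpose (A t) = - A t)
       \<and> (\<forall>t s. A t = A s)
       \<and> (\<forall>t s. r0 t = r0 s)
       \<and> (\<forall>t x. e t x = c t)
       \<and> (\<forall>t x. m t x = A t *v x + b t - (deriv c t / sqrt (2 * CARD('n))) *\<^sub>R x)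
       \<and> (\<forall>t x. r t x = r0 t - vector_derivative b (at t) \<bullet> x
                 + xi2 \<phi> x / (2 * sqrt (2 * CARD('n))) * deriv (deriv c) t
                 + sqrt (2 / CARD('n)) * c t * xiphi \<phi> x)
       \<and> (\<forall>t x. (2 * xiphi \<phi> x + grad \<phi> x \<bullet> x - CARD('n)) / sqrt (2 * CARD('n)) * deriv c t
                 + xi2 \<phi> x / (2 * sqrt (2 * CARD('n))) * deriv (deriv (deriv c)) t
                 - grad \<phi> x \<bullet> b t
                 - vector_derivative (\<lambda>s. vector_derivative b (at s)) (at t) \<bullet> x
                 - grad \<phi> x \<bullet> (A t *v x) = 0)"
proof -
  interpret P: philoc \<phi> by (rule philoc.intro[OF phi_C2 H3a H6])
  define d where "d = real CARD('n)"
  define k where "k = 1 / sqrt (2 * d)"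
  define a where "a = sqrt (2 / d)"
  have dpos: "d > 0" unfolding d_def by simp
  have a2k: "a = 2 * k"
  proof -
    have "sqrt (2 / d) * sqrt (2 * d) = 2"
      using dpos by (simp add: real_sqrt_mult[symmetric])
    then show ?thesis unfolding a_def k_def using dpos by (simp add: field_simps)
  qed
  have kd: "1 / sqrt (2 * real CARD('n)) = k" by (simp add: k_def d_def)
  have ad: "sqrt (2 / real CARD('n)) = a" by (simp add: a_def d_def)
  define E0 where "E0 = (\<lambda>(t::real, x::real^'n). e t x)"
  define E1 where "E1 = (\<lambda>y. frechet_derivative E0 (at y) (1::real, 0::real^'n))"
  define E2 where "E2 = (\<lambda>y. frechet_derivative E1 (at y) (1::real, 0::real^'n))"
  define E3 where "E3 = (\<lambda>y. frechet_derivative E2 (at y) (1::real, 0::real^'n))"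
  define R0 where "R0 = (\<lambda>(t::real, x::real^'n). r t x)"
  define R1 where "R1 = (\<lambda>y. frechet_derivative R0 (at y) (1::real, 0::real^'n))"
  define M0 where "M0 = (\<lambda>(t::real, x::real^'n). m t x)"
  define M1 where "M1 = (\<lambda>y. frechet_derivative M0 (at y) (1::real, 0::real^'n))"
  define M2 where "M2 = (\<lambda>y. frechet_derivative M1 (at y) (1::real, 0::real^'n))"
  have sE0: "smooth_fun E0" using e_smooth by (simp add: E0_def)
  have sE1: "smooth_fun E1" unfolding E1_def by (rule sm_Dt[OF sE0])
  have sE2: "smooth_fun E2" unfolding E2_def by (rule sm_Dt[OF sE1])
  have sR0: "smooth_fun R0" using r_smooth by (simp add: R0_def)
  have sM0: "smooth_fun M0" using m_smooth by (simp add: M0_def)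
  have sM1: "smooth_fun M1" unfolding M1_def by (rule sm_Dt[OF sM0])
  have tdE0: "((\<lambda>s. e s x) has_real_derivative E1 (t, x)) (at t)" for t x
    using sm_time_real[OF sm_diff[OF sE0], where t=t and x=x] by (simp add: E1_def E0_def)
  have tdE1: "((\<lambda>s. E1 (s, x)) has_real_derivative E2 (t, x)) (at t)" for t x
    using sm_time_real[OF sm_diff[OF sE1], where t=t and x=x] by (simp add: E2_def)
  have tdE2: "((\<lambda>s. E2 (s, x)) has_real_derivative E3 (t, x)) (at t)" for t x
    using sm_time_real[OF sm_diff[OF sE2], where t=t and x=x] by (simp add: E3_def)
  have tdR0: "((\<lambda>s. r s x) has_real_derivative R1 (t, x)) (at t)" for t x
    using sm_time_real[OF sm_diff[OF sR0], where t=t and x=x] by (simp add: R1_def R0_def)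
  have tdM0: "((\<lambda>s. m s x) has_vector_derivative M1 (t, x)) (at t)" for t x
    using sm_time[OF sm_diff[OF sM0], where t=t and x=x] by (simp add: M1_def M0_def)
  have tdM1: "((\<lambda>s. M1 (s, x)) has_vector_derivative M2 (t, x)) (at t)" for t x
    using sm_time[OF sm_diff[OF sM1], where t=t and x=x] by (simp add: M2_def)
  have ediff: "e t differentiable (at z)" for t z
    using sm_space_diff[OF sE0, of t z] by (simp add: E0_def)
  have mdiff: "m t differentiable (at z)" for t z
    using sm_space_diff[OF sM0, of t z] by (simp add: M0_def)
  have rdiff: "r t differentiable (at z)" for t z
    using sm_space_diff[OF sR0, of t z] by (simp add: R0_def)
  have econst: "e t x = e t 0" for t x
  proof -
    have "(e t has_derivative (\<lambda>v. 0)) (at z)" for z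
    proof -
      have "frechet_derivative (e t) (at z) = (\<lambda>v. 0)"
        by (rule ext) (simp add: grad_inner[OF ediff] eq5)
      then show ?thesis using ediff frechet_derivative_works by metis
    qed
    then obtain C where "\<forall>x\<in>UNIV. e t x = C"
      using has_derivative_zero_constant[of UNIV "e t"] by (auto simp: has_derivative_at_withinI)
    then show ?thesis by simp
  qed
  have cfun: "c = (\<lambda>t. e t 0)"
  proof
    fix t
    have "(\<lambda>x. rho \<phi> x *\<^sub>R e t x) = (\<lambda>x. rho \<phi> x * e t 0)"
      by (rule ext) (subst econst, simp)
    then show "c t = e t 0" unfolding c_def avg_def using H3a by simp
  qed
  have hc1: "(c has_real_derivative E1 (t, 0)) (at t)" for t
    unfolding cfun by (rule tdE0)
  have dc: "deriv c = (\<lambda>t. E1 (t, 0))" by (rule ext) (rule DERIV_imp_deriv[OF hc1])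
  have ddc: "deriv (deriv c) = (\<lambda>t. E2 (t, 0))" unfolding dc by (rule ext) (rule DERIV_imp_deriv[OF tdE1])
  have dddc: "deriv (deriv (deriv c)) = (\<lambda>t. E3 (t, 0))" unfolding ddc by (rule ext) (rule DERIV_imp_deriv[OF tdE2])
  have dex: "deriv (\<lambda>s. e s x) t = E1 (t, 0)" for t x
  proof -
    have "(\<lambda>s. e s x) = c" unfolding cfun by (rule ext) (rule econst)
    then show ?thesis using dc by simp
  qed
  define mu where "mu s = - k * E1 (s, 0)" for s
  have Dm: "(m s has_derivative frechet_derivative (m s) (at p)) (at p)" for s p
    using mdiff frechet_derivative_works by blast
  have Kq: "frechet_derivative (m s) (at p) v \<bullet> v = mu s * (v \<bullet> v)" for s p v
  proof -
    have "(jac (m s) p $ i $ j + jac (m s) p $ j $ i) / 2 = mu s * (if i = j then 1 else 0)" for i j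
    proof -
      have "((1 / sqrt (2 * CARD('n)) * deriv (\<lambda>s. e s p) s) *\<^sub>R (mat 1 :: real^'n^'n)) $ i $ j
            = (- symgrad (m s) p) $ i $ j" using eq4[where t=s and x=p] by simp
      then show ?thesis by (simp add: kd dex mat_def symgrad_def mu_def)
    qed
    then show ?thesis unfolding jac_mult[OF mdiff] by (rule quad_iso)
  qed
  have kill: "((m s y - mu s *\<^sub>R y) - (m s z - mu s *\<^sub>R z)) \<bullet> (y - z) = 0" for s y z
    by (rule killing[OF Dm Kq])
  define W where "W s y = m s y - m s 0 - mu s *\<^sub>R y" for s y
  have Wp: "(W s y - W s z) \<bullet> (y - z) = 0" for s y z
    using kill[of s y z] by (simp add: W_def algebra_simps)
  have W0: "W s 0 = 0" for s by (simp add: W_def)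
  have Wlin: "linear (W s)" for s by (rule skew_lin_lin[OF Wp W0])
  have Wskew: "W s y \<bullet> z = - (W s z \<bullet> y)" for s y z by (rule skew_lin_skew[OF Wp W0])
  define Mat where "Mat s = matrix (W s)" for s
  have Wmat: "Mat s *v x = W s x" for s x
    using fun_cong[OF matrix_vector_mul(2)[OF Wlin[of s]], of x] by (simp add: Mat_def)
  have mform: "m s x = Mat s *v x + m s 0 + mu s *\<^sub>R x" for s x
    by (simp add: Wmat W_def)
  have Mij: "Mat s $ i $ j = W s (axis j 1) \<bullet> axis i 1" for s i j
    by (simp add: Mat_def matrix_def inner_axis)
  have Mskew: "Mat s $ i $ j = - (Mat s $ j $ i)" for s i j
    unfolding Mij by (rule Wskew)
  have Mdiag: "Mat s $ i $ i = 0" for s i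
    using Mskew[of s i i] by simp
  have mder: "(m s has_derivative (\<lambda>h. W s h + mu s *\<^sub>R h)) (at x)" for s x
  proof -
    have e: "m s = (\<lambda>x. W s x + m s 0 + mu s *\<^sub>R x)" by (rule ext) (simp add: W_def)
    have "(W s has_derivative W s) (at x)" by (rule linear_imp_has_derivative[OF Wlin])
    then show ?thesis by (subst e) (auto intro!: derivative_eq_intros)
  qed
  have fdm: "frechet_derivative (m s) (at x) = (\<lambda>h. W s h + mu s *\<^sub>R h)" for s x
    by (rule frechet_derivative_at[OF mder, symmetric])
  have jacm: "jac (m s) x $ i $ j = Mat s $ i $ j + mu s * (if i = j then 1 else 0)" for s x i j
    by (simp add: jac_def fdm Mat_def matrix_def axis_def)
  have skewm: "skewgrad (m s) x = Mat s" for s x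
  proof -
    have "skewgrad (m s) x $ i $ j = Mat s $ i $ j" for i j
      using Mskew[of s j i] Mdiag[of s i] by (cases "i = j") (simp_all add: skewgrad_def jacm)
    then show ?thesis by (simp add: vec_eq_iff)
  qed
  have divm: "divg (m s) x = d * mu s" for s x
    by (simp add: divg_def jacm Mdiag d_def)
  have Afun: "A s = Mat s" for s
    unfolding A_def avg_def skewm using P.int_rho H3a by simp
  have Atr: "transpose (A s) = - A s" for s
  proof -
    have "transpose (Mat s) $ i $ j = (- Mat s) $ i $ j" for i j
      using Mskew[of s j i] by (simp add: transpose_def)
    then show ?thesis unfolding Afun by (simp add: vec_eq_iff)
  qed
  have bfun: "b s = m s 0" for s
  proof -
    have bl: "bounded_linear (W s)" using Wlin linear_conv_bounded_linear by blast
    have eqf: "(\<lambda>x. rho \<phi> x *\<^sub>R m s x) = (\<lambda>x. W s (rho \<phi> x *\<^sub>R x) + (rho \<phi> x *\<^sub>R m s 0 + mu s *\<^sub>R (rho \<phi> x *\<^sub>R x)))"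
    proof
      fix x
      have "rho \<phi> x *\<^sub>R m s x = rho \<phi> x *\<^sub>R (W s x + m s 0 + mu s *\<^sub>R x)" by (simp add: W_def)
      then show "rho \<phi> x *\<^sub>R m s x = W s (rho \<phi> x *\<^sub>R x) + (rho \<phi> x *\<^sub>R m s 0 + mu s *\<^sub>R (rho \<phi> x *\<^sub>R x))"
        by (simp add: linear_cmul[OF Wlin] algebra_simps)
    qed
    have i1: "integrable lborel (\<lambda>x. W s (rho \<phi> x *\<^sub>R x))"
      by (rule integrable_bounded_linear[OF bl P.int_xv])
    have i2: "integrable lborel (\<lambda>x. rho \<phi> x *\<^sub>R m s 0)" using P.int_rho by simp
    have i3: "integrable lborel (\<lambda>x. mu s *\<^sub>R (rho \<phi> x *\<^sub>R x))" by (rule integrable_scaleR_right) (rule P.int_xv)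
    have "(\<integral>x. W s (rho \<phi> x *\<^sub>R x) \<partial>lborel) = W s (\<integral>x. rho \<phi> x *\<^sub>R x \<partial>lborel)"
      by (rule integral_bounded_linear[OF bl P.int_xv])
    also have "\<dots> = 0" using H3b W0 by simp
    finally have z1: "(\<integral>x. W s (rho \<phi> x *\<^sub>R x) \<partial>lborel) = 0" .
    have sp: "(\<integral>x. W s (rho \<phi> x *\<^sub>R x) + (rho \<phi> x *\<^sub>R m s 0 + mu s *\<^sub>R (rho \<phi> x *\<^sub>R x)) \<partial>lborel)
        = (\<integral>x. W s (rho \<phi> x *\<^sub>R x) \<partial>lborel) + ((\<integral>x. rho \<phi> x *\<^sub>R m s 0 \<partial>lborel) + (\<integral>x. mu s *\<^sub>R (rho \<phi> x *\<^sub>R x) \<partial>lborel))"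
      by (simp only: Bochner_Integration.integral_add[OF i1 Bochner_Integration.integrable_add[OF i2 i3]] Bochner_Integration.integral_add[OF i2 i3])
    have z3: "(\<integral>x. mu s *\<^sub>R (rho \<phi> x *\<^sub>R x) \<partial>lborel) = 0"
      by (simp only: integral_scaleR_right H3b scaleR_zero_right)
    have z2: "(\<integral>x. rho \<phi> x *\<^sub>R m s 0 \<partial>lborel) = m s 0"
      using P.int_rho H3a by simp
    show ?thesis unfolding b_def avg_def eqf sp z1 z2 z3 by simp
  qed
  have bf: "b = (\<lambda>s. m s 0)" by (rule ext) (rule bfun)
  have db: "vector_derivative b (at t) = M1 (t, 0)" for t
    unfolding bf by (rule vector_derivative_at[OF tdM0])
  have ddb: "vector_derivative (\<lambda>s. vector_derivative b (at s)) (at t) = M2 (t, 0)" for t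
    unfolding db by (rule vector_derivative_at[OF tdM1])
  have eq2': "M1 (t, x) = - grad (r t) x + (a * e t 0) *\<^sub>R grad \<phi> x" for t x
    using eq2[where t=t and x=x] vector_derivative_at[OF tdM0[of x t]] econst[of t x] by (simp add: ad)
  define N where "N t x = M1 (t, x) - M1 (t, 0) + (k * E2 (t, 0)) *\<^sub>R x" for t x
  have hmu: "(mu has_real_derivative (- k * E2 (t, 0))) (at t)" for t
    unfolding mu_def[abs_def] by (auto intro!: derivative_eq_intros tdE1)
  have Wder: "((\<lambda>s. W s x) has_vector_derivative N t x) (at t)" for t x
  proof -
    have "((\<lambda>s. m s x - m s 0 - mu s *\<^sub>R x) has_vector_derivative
           (M1 (t, x) - M1 (t, 0) - (mu t *\<^sub>R 0 + (- k * E2 (t, 0)) *\<^sub>R x))) (at t)"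
      by (intro has_vector_derivative_diff tdM0 has_vector_derivative_scaleR hmu has_vector_derivative_const)
    then show ?thesis by (simp add: W_def[abs_def] N_def)
  qed
  have Nsk: "N t z \<bullet> z = 0" for t z
  proof -
    have "((\<lambda>s. W s z \<bullet> z) has_derivative (\<lambda>h. (h *\<^sub>R N t z) \<bullet> z)) (at t)"
      using Wder[of z t] unfolding has_vector_derivative_def
      by (auto intro!: derivative_eq_intros)
    then have "((\<lambda>s. W s z \<bullet> z) has_real_derivative (N t z \<bullet> z)) (at t)"
      by (rule has_derivative_imp_has_field_derivative) simp
    moreover have "(\<lambda>s. W s z \<bullet> z) = (\<lambda>s. 0)"
      using Wskew[of _ z z] by (auto simp: fun_eq_iff)
    ultimately have "((\<lambda>s. 0::real) has_real_derivative (N t z \<bullet> z)) (at t)" by simp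
    then show ?thesis using DERIV_const DERIV_unique by blast
  qed
  have N0: "N t 0 = 0" for t by (simp add: N_def)
  define g where "g t x = r t x + M1 (t, 0) \<bullet> x - (k * E2 (t, 0) / 2) * (x \<bullet> x) - a * e t 0 * \<phi> x" for t x
  have gder: "(g t has_derivative (\<lambda>v. - (N t x \<bullet> v))) (at x)" for t x
  proof -
    have r': "(r t has_derivative (\<lambda>v. grad (r t) x \<bullet> v)) (at x)"
    proof -
      have "frechet_derivative (r t) (at x) = (\<lambda>v. grad (r t) x \<bullet> v)"
        by (rule ext) (simp add: grad_inner[OF rdiff])
      then show ?thesis using rdiff frechet_derivative_works by metis
    qed
    have p': "(\<phi> has_derivative (\<lambda>v. grad \<phi> x \<bullet> v)) (at x)"
    proof -
      have "frechet_derivative \<phi> (at x) = (\<lambda>v. grad \<phi> x \<bullet> v)"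
        by (rule ext) (simp add: grad_inner[OF P.phi_diff])
      then show ?thesis using P.phi_diff frechet_derivative_works by metis
    qed
    have "(g t has_derivative (\<lambda>v. grad (r t) x \<bullet> v + M1 (t, 0) \<bullet> v - (k * E2 (t, 0) / 2) * (x \<bullet> v + v \<bullet> x)
            - a * e t 0 * (grad \<phi> x \<bullet> v))) (at x)"
      unfolding g_def[abs_def] using r' p' by (auto intro!: derivative_eq_intros)
    moreover have "(\<lambda>v. grad (r t) x \<bullet> v + M1 (t, 0) \<bullet> v - (k * E2 (t, 0) / 2) * (x \<bullet> v + v \<bullet> x)
            - a * e t 0 * (grad \<phi> x \<bullet> v)) = (\<lambda>v. - (N t x \<bullet> v))"
    proof
      fix v
      have gr: "grad (r t) x = (a * e t 0) *\<^sub>R grad \<phi> x - M1 (t, x)" using eq2'[of t x] by simp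
      show "grad (r t) x \<bullet> v + M1 (t, 0) \<bullet> v - (k * E2 (t, 0) / 2) * (x \<bullet> v + v \<bullet> x)
            - a * e t 0 * (grad \<phi> x \<bullet> v) = - (N t x \<bullet> v)"
        unfolding gr N_def by (simp add: inner_diff_left inner_add_left inner_commute algebra_simps)
    qed
    ultimately show ?thesis by simp
  qed
  have gconst: "g t y = g t 0" for t y
  proof -
    have "g t (0 + y) = g t 0"
    proof (rule line_const[where G = "\<lambda>p v. - (N t p \<bullet> v)"])
      show "(g t has_derivative (\<lambda>v. - (N t p \<bullet> v))) (at p)" for p by (rule gder)
      show "- (N t (0 + \<tau> *\<^sub>R y) \<bullet> y) = 0" for \<tau>
      proof (cases "\<tau> = 0")
        case True then show ?thesis by (simp add: N0)
      next
        case False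
        have "\<tau> * (N t (\<tau> *\<^sub>R y) \<bullet> y) = 0" using Nsk[of t "\<tau> *\<^sub>R y"] by simp
        then show ?thesis using False by simp
      qed
    qed
    then show ?thesis by simp
  qed
  have Nzero: "N t x = 0" for t x
  proof -
    have "g t = (\<lambda>x. g t 0)" by (rule ext) (rule gconst)
    then have "(g t has_derivative (\<lambda>v. 0)) (at x)" by (metis has_derivative_const)
    then have "(\<lambda>v. - (N t x \<bullet> v)) = (\<lambda>v. 0)" using has_derivative_unique gder by blast
    then have "N t x \<bullet> N t x = 0" by (metis neg_equal_0_iff_equal)
    then show ?thesis by simp
  qed
  have Wconst: "W s x = W 0 x" for s x
  proof -
    have "((\<lambda>s. W s x) has_derivative (\<lambda>h. 0)) (at s within UNIV)" for s
      using Wder[of x s] by (simp add: Nzero has_vector_derivative_def)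
    then obtain C where "\<forall>s\<in>UNIV. W s x = C"
      using has_derivative_zero_constant[of UNIV "\<lambda>s. W s x"] by auto
    then show ?thesis by simp
  qed
  have Mconst: "Mat s = Mat 0" for s
  proof -
    have "W s = W 0" by (rule ext) (rule Wconst)
    then show ?thesis by (simp add: Mat_def)
  qed
  define Rf where "Rf t = r t 0 - a * e t 0 * \<phi> 0" for t
  have rform: "r t x = Rf t - M1 (t, 0) \<bullet> x + (k * E2 (t, 0) / 2) * (x \<bullet> x) + a * e t 0 * \<phi> x" for t x
    using gconst[of t x] by (simp add: g_def Rf_def algebra_simps)
  define X2 where "X2 = (\<integral>x. rho \<phi> x * (norm x)^2 \<partial>lborel)"
  define Pp where "Pp = (\<integral>x. rho \<phi> x * \<phi> x \<partial>lborel)"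
  have hb_rho: "has_bochner_integral lborel (rho \<phi>) 1"
    using P.int_rho H3a by (simp add: has_bochner_integral_iff)
  have hb_x: "has_bochner_integral lborel (\<lambda>x. rho \<phi> x *\<^sub>R x) 0"
    using P.int_xv H3b by (simp add: has_bochner_integral_iff)
  have hb_n2: "has_bochner_integral lborel (\<lambda>x. rho \<phi> x * (norm x)^2) X2"
    using P.int_n2 by (simp add: has_bochner_integral_iff X2_def)
  have hb_phi: "has_bochner_integral lborel (\<lambda>x. rho \<phi> x * \<phi> x) Pp"
    using P.int_phi by (simp add: has_bochner_integral_iff Pp_def)
  have hb_g: "has_bochner_integral lborel (\<lambda>x. rho \<phi> x * grad \<phi> x $ i) 0" for i
    using P.int_g P.I1 by (simp add: has_bochner_integral_iff)
  have hb_xg: "has_bochner_integral lborel (\<lambda>x. x $ j * (rho \<phi> x * grad \<phi> x $ i)) (if i = j then 1 else 0)" for i j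
    using P.int_xg P.I2 by (simp add: has_bochner_integral_iff)
  have xi2e: "xi2 \<phi> x = (norm x)^2 - X2" for x by (simp add: xi2_def avg_def X2_def)
  have xiphie: "xiphi \<phi> x = \<phi> x - Pp" for x by (simp add: xiphi_def avg_def Pp_def)
  have r0form: "r0 t = Rf t + (k * E2 (t, 0) / 2) * X2 + a * e t 0 * Pp" for t
  proof -
    have eqf: "(\<lambda>x. rho \<phi> x *\<^sub>R r t x) = (\<lambda>x. rho \<phi> x * Rf t - M1 (t, 0) \<bullet> (rho \<phi> x *\<^sub>R x)
        + (k * E2 (t, 0) / 2) * (rho \<phi> x * (norm x)^2) + (a * e t 0) * (rho \<phi> x * \<phi> x))"
      by (rule ext) (simp add: rform[of t] power2_norm_eq_inner algebra_simps)
    have "has_bochner_integral lborel (\<lambda>x. rho \<phi> x * Rf t - M1 (t, 0) \<bullet> (rho \<phi> x *\<^sub>R x)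
        + (k * E2 (t, 0) / 2) * (rho \<phi> x * (norm x)^2) + (a * e t 0) * (rho \<phi> x * \<phi> x))
        (1 * Rf t - M1 (t, 0) \<bullet> 0 + (k * E2 (t, 0) / 2) * X2 + (a * e t 0) * Pp)"
      by (intro has_bochner_integral_add has_bochner_integral_diff has_bochner_integral_mult_right
          has_bochner_integral_mult_left has_bochner_integral_inner_right hb_rho hb_x hb_n2 hb_phi)
    then show ?thesis unfolding r0_def avg_def eqf
      by (simp add: has_bochner_integral_integral_eq)
  qed
  have kpos: "k > 0" unfolding k_def using dpos by simp
  have sq2: "sqrt (real CARD('n) * 2) = 1 / k" by (simp add: k_def d_def mult.commute)
  have sq: "sqrt (2 * real CARD('n)) = 1 / k" by (simp add: k_def d_def)
  have claim6: "r t x = r0 t - vector_derivative b (at t) \<bullet> x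
                 + xi2 \<phi> x / (2 * sqrt (2 * CARD('n))) * deriv (deriv c) t
                 + sqrt (2 / CARD('n)) * c t * xiphi \<phi> x" for t x
    unfolding r0form db ddc unfolding cfun xi2e xiphie ad sq rform[of t x]
    using kpos by (simp add: power2_norm_eq_inner sq2 field_simps)
  have hM: "((\<lambda>s. M1 (s, 0) \<bullet> x) has_real_derivative (M2 (t, 0) \<bullet> x)) (at t)" for t x
  proof -
    have "((\<lambda>s. M1 (s, 0) \<bullet> x) has_derivative (\<lambda>h. (h *\<^sub>R M2 (t, 0)) \<bullet> x)) (at t)"
      using tdM1[of 0 t] unfolding has_vector_derivative_def
      by (auto intro!: derivative_eq_intros)
    then show ?thesis by (rule has_derivative_imp_has_field_derivative) simp
  qed
  have rfun: "(\<lambda>s. r s x) = (\<lambda>s. r s 0 - a * e s 0 * \<phi> 0 - M1 (s, 0) \<bullet> x + (k * E2 (s, 0) / 2) * (x \<bullet> x) + a * e s 0 * \<phi> x)" for x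
  proof
    fix s
    show "r s x = r s 0 - a * e s 0 * \<phi> 0 - M1 (s, 0) \<bullet> x + (k * E2 (s, 0) / 2) * (x \<bullet> x) + a * e s 0 * \<phi> x"
      unfolding rform[of s x] Rf_def by simp
  qed
  have rt: "((\<lambda>s. r s x) has_real_derivative
      (R1 (t, 0) - a * E1 (t, 0) * \<phi> 0 - M2 (t, 0) \<bullet> x + (k * E3 (t, 0) / 2) * (x \<bullet> x) + a * E1 (t, 0) * \<phi> x)) (at t)" for t x
    unfolding rfun by (auto intro!: derivative_eq_intros tdR0 tdE0 hM tdE1 tdE2)
  have Rel: "R1 (t, 0) - a * E1 (t, 0) * \<phi> 0 - M2 (t, 0) \<bullet> x + (k * E3 (t, 0) / 2) * (x \<bullet> x) + a * E1 (t, 0) * \<phi> x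
      = - (d * mu t) + grad \<phi> x \<bullet> (Mat t *v x + m t 0 + mu t *\<^sub>R x)" for t x
    using eq1[where t=t and x=x] DERIV_imp_deriv[OF rt[of x t]] divm[of t x] mform[of t x] by simp
  define Q where "Q t = R1 (t, 0) - a * E1 (t, 0) * \<phi> 0 + (k * E3 (t, 0) / 2) * X2 + a * E1 (t, 0) * Pp" for t
  define L where "L t x = (2 * (\<phi> x - Pp) + grad \<phi> x \<bullet> x - d) * k * E1 (t, 0)
      + ((norm x)^2 - X2) * (k / 2) * E3 (t, 0) - grad \<phi> x \<bullet> m t 0 - M2 (t, 0) \<bullet> x
      - grad \<phi> x \<bullet> (Mat t *v x)" for t x
  have Lx: "L t x = - Q t" for t x
  proof -
    have "L t x + Q t = 0"
      using Rel[of t x] unfolding L_def Q_def mu_def a2k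
      by (simp add: power2_norm_eq_inner inner_add_right algebra_simps diff_divide_distrib add_divide_distrib)
    then show ?thesis by simp
  qed
  have intL: "(\<integral>x. rho \<phi> x * L t x \<partial>lborel) = 0" for t
  proof -
    have s1: "grad \<phi> x \<bullet> x = (\<Sum>i\<in>UNIV. x$i * grad \<phi> x $ i)" for x by (simp add: inner_vec_def mult.commute)
    have s2: "grad \<phi> x \<bullet> m t 0 = (\<Sum>i\<in>UNIV. (m t 0)$i * grad \<phi> x $ i)" for x by (simp add: inner_vec_def mult.commute)
    have s3: "grad \<phi> x \<bullet> (Mat t *v x) = (\<Sum>i\<in>UNIV. \<Sum>j\<in>UNIV. Mat t$i$j * (x$j * grad \<phi> x $ i))" for x
      by (simp add: inner_vec_def matrix_vector_mult_def sum_distrib_left algebra_simps)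
    have eqf: "(\<lambda>x. rho \<phi> x * L t x) = (\<lambda>x. (k * E1 (t, 0)) * (2 * (rho \<phi> x * \<phi> x) - (2 * Pp) * rho \<phi> x
          + (\<Sum>i\<in>UNIV. x$i * (rho \<phi> x * grad \<phi> x $ i)) - d * rho \<phi> x)
        + (k * E3 (t, 0) / 2) * (rho \<phi> x * (norm x)^2 - X2 * rho \<phi> x)
        - (\<Sum>i\<in>UNIV. (m t 0)$i * (rho \<phi> x * grad \<phi> x $ i))
        - M2 (t, 0) \<bullet> (rho \<phi> x *\<^sub>R x)
        - (\<Sum>i\<in>UNIV. \<Sum>j\<in>UNIV. Mat t$i$j * (x$j * (rho \<phi> x * grad \<phi> x $ i))))"
      by (rule ext) (simp add: L_def s1 s2 s3 sum_distrib_left algebra_simps)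
    have v: "(\<Sum>i\<in>UNIV. \<Sum>j\<in>UNIV. Mat t$i$j * (if i = j then 1 else 0)) = 0"
    proof -
      have "Mat t$i$j * (if i = j then 1 else 0) = (if i = j then Mat t$i$j else 0)" for i j by simp
      then show ?thesis by (simp add: Mdiag)
    qed
    have hS1: "has_bochner_integral lborel (\<lambda>x. \<Sum>i\<in>UNIV. x$i * (rho \<phi> x * grad \<phi> x $ i)) d"
    proof -
      have "has_bochner_integral lborel (\<lambda>x. \<Sum>i\<in>UNIV. x$i * (rho \<phi> x * grad \<phi> x $ i)) (\<Sum>i\<in>(UNIV::'n set). (if i = i then 1 else 0))"
        by (rule has_bochner_integral_sum) (rule hb_xg)
      then show ?thesis by (simp add: d_def)
    qed
    have hS2: "has_bochner_integral lborel (\<lambda>x. \<Sum>i\<in>UNIV. (m t 0)$i * (rho \<phi> x * grad \<phi> x $ i)) 0"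
    proof -
      have "has_bochner_integral lborel (\<lambda>x. \<Sum>i\<in>UNIV. (m t 0)$i * (rho \<phi> x * grad \<phi> x $ i)) (\<Sum>i\<in>UNIV. (m t 0)$i * 0)"
        by (rule has_bochner_integral_sum) (rule has_bochner_integral_mult_right, rule hb_g)
      then show ?thesis by simp
    qed
    have hS3: "has_bochner_integral lborel (\<lambda>x. \<Sum>i\<in>UNIV. \<Sum>j\<in>UNIV. Mat t$i$j * (x$j * (rho \<phi> x * grad \<phi> x $ i))) 0"
    proof -
      have "has_bochner_integral lborel (\<lambda>x. \<Sum>i\<in>UNIV. \<Sum>j\<in>UNIV. Mat t$i$j * (x$j * (rho \<phi> x * grad \<phi> x $ i)))
          (\<Sum>i\<in>UNIV. \<Sum>j\<in>UNIV. Mat t$i$j * (if i = j then 1 else 0))"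
        by (rule has_bochner_integral_sum, rule has_bochner_integral_sum, rule has_bochner_integral_mult_right, rule hb_xg)
      then show ?thesis using v by simp
    qed
    have hb: "has_bochner_integral lborel (\<lambda>x. (k * E1 (t, 0)) * (2 * (rho \<phi> x * \<phi> x) - (2 * Pp) * rho \<phi> x
          + (\<Sum>i\<in>UNIV. x$i * (rho \<phi> x * grad \<phi> x $ i)) - d * rho \<phi> x)
        + (k * E3 (t, 0) / 2) * (rho \<phi> x * (norm x)^2 - X2 * rho \<phi> x)
        - (\<Sum>i\<in>UNIV. (m t 0)$i * (rho \<phi> x * grad \<phi> x $ i))
        - M2 (t, 0) \<bullet> (rho \<phi> x *\<^sub>R x)
        - (\<Sum>i\<in>UNIV. \<Sum>j\<in>UNIV. Mat t$i$j * (x$j * (rho \<phi> x * grad \<phi> x $ i))))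
       ((k * E1 (t, 0)) * (2 * Pp - (2 * Pp) * 1 + d - d * 1)
        + (k * E3 (t, 0) / 2) * (X2 - X2 * 1)
        - 0
        - M2 (t, 0) \<bullet> 0
        - 0)"
      by (intro has_bochner_integral_add has_bochner_integral_diff has_bochner_integral_mult_right
          has_bochner_integral_inner_right hb_rho hb_x hb_n2 hb_phi hS1 hS2 hS3)
    have "(\<integral>x. rho \<phi> x * L t x \<partial>lborel) = ((k * E1 (t, 0)) * (2 * Pp - (2 * Pp) * 1 + d - d * 1)
        + (k * E3 (t, 0) / 2) * (X2 - X2 * 1)
        - 0
        - M2 (t, 0) \<bullet> 0
        - 0)"
      unfolding eqf by (rule has_bochner_integral_integral_eq[OF hb])
    also have "\<dots> = 0" by simp
    finally show ?thesis .
  qed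
  have Q0: "Q t = 0" for t
  proof -
    have "(\<lambda>x. rho \<phi> x * L t x) = (\<lambda>x. rho \<phi> x * (- Q t))" by (simp add: Lx)
    then have "(\<integral>x. rho \<phi> x * (- Q t) \<partial>lborel) = 0" using intL[of t] by simp
    then show ?thesis using H3a by simp
  qed
  have claim3: "r0 t = r0 s" for t s
  proof -
    have r0f: "r0 = (\<lambda>t. r t 0 - a * e t 0 * \<phi> 0 + (k * E2 (t, 0) / 2) * X2 + a * e t 0 * Pp)"
      by (rule ext) (simp add: r0form Rf_def)
    have "(r0 has_real_derivative 0) (at t)" for t
      using Q0[of t] unfolding r0f Q_def
      by (auto intro!: derivative_eq_intros tdR0 tdE0 tdE1 tdE2 simp: algebra_simps)
    then show ?thesis by (intro DERIV_isconst_all) auto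
  qed
  have claim7: "(2 * xiphi \<phi> x + grad \<phi> x \<bullet> x - CARD('n)) / sqrt (2 * CARD('n)) * deriv c t
                 + xi2 \<phi> x / (2 * sqrt (2 * CARD('n))) * deriv (deriv (deriv c)) t
                 - grad \<phi> x \<bullet> b t
                 - vector_derivative (\<lambda>s. vector_derivative b (at s)) (at t) \<bullet> x
                 - grad \<phi> x \<bullet> (A t *v x) = 0" for t x
  proof -
    have "(2 * xiphi \<phi> x + grad \<phi> x \<bullet> x - CARD('n)) / sqrt (2 * CARD('n)) * deriv c t
                 + xi2 \<phi> x / (2 * sqrt (2 * CARD('n))) * deriv (deriv (deriv c)) t
                 - grad \<phi> x \<bullet> b t
                 - vector_derivative (\<lambda>s. vector_derivative b (at s)) (at t) \<bullet> x
                 - grad \<phi> x \<bullet> (A t *v x) = L t x"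
      unfolding ddb dddc unfolding dc bfun Afun xiphie xi2e L_def
      using kpos by (simp add: sq sq2 d_def field_simps)
    then show ?thesis using Lx[of t x] Q0[of t] by simp
  qed
  have claim5: "m t x = A t *v x + b t - (deriv c t / sqrt (2 * CARD('n))) *\<^sub>R x" for t x
    unfolding Afun bfun dc using mform[of t x] kpos by (simp add: sq sq2 mu_def)
  have c2: "A t = A s" for t s using Afun Mconst by metis
  have c4: "e t x = c t" for t x using econst cfun by simp
  show ?thesis
    by (intro conjI allI Atr c2 claim3 c4 claim5 claim6 claim7)
qed

end
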